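(* Let $k\ge2$, let $b$ be an irreducible Brauer diagram of size $k$ (i.e. $\mathrm{nc}(b\vee\mathbf{1}_k)=1$), and let $1\le i\ne j\le k$ and $e=e_{ij}$. Then $\mathrm{nc}(e\vee b)-\mathrm{nc}(b\vee\mathbf{1}_k)\in\{0,1\}$, and $\mathrm{nc}(e\vee b)=\mathrm{nc}(b\vee\mathbf{1}_k)+1$ if and only if $s(i)s(j)=-1$ for any orientation $s$ of $b$.
   Context: A Brauer diagram of size $k$ is a partition of $\{1,\dots,k,1',\dots,k'\}$ into two-element blocks (links). For partitions, $\vee$ is the join (finest common coarsening) and $\mathrm{nc}$ the number of blocks; $\mathbf{1}_k=\{\{x,x'\}:x\le k\}$. The projector $e_{ij}$ is the Brauer diagram $\{\{i,j\},\{i',j'\}\}\cup\{\{x,x'\}:x\ne i,j\}$. Orientation: let $\Gamma_b$ be the graph with vertices $\{1,\dots,k,1',\dots,k'\}$ whose edges are the links of $b$ together with the vertical edges $\{x,x'\}$, $x\le k$; each connected component is a cycle. An orientation of $b$ is a choice of orientation of each cycle of $\Gamma_b$; its sign function $s:\{1,\dots,k\}\to\{-1,1\}$ is $s(x)=1$ if the link of $b$ containing $x$ is incoming at $x$ for the chosen orientation, and $s(x)=-1$ otherwise. *)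

theory Defs
  imports Main
begin

text \<open>Points: (x, False) stands for x, (x, True) stands for x'.\<close>
type_synonym pt = "nat \<times> bool"

definition ground :: "nat \<Rightarrow> pt set" where
  "ground k = {1..k} \<times> UNIV"

definition is_partition :: "'a set \<Rightarrow> 'a set set \<Rightarrow> bool" where
  "is_partition A P \<longleftrightarrow> \<Union>P = A \<and> {} \<notin> P \<and>
     (\<forall>B\<in>P. \<forall>C\<in>P. B \<noteq> C \<longrightarrow> B \<inter> C = {})"

definition brauer :: "nat \<Rightarrow> pt set set \<Rightarrow> bool" where
  "brauer k b \<longleftrightarrow> is_partition (ground k) b \<and> (\<forall>B\<in>b. card B = 2)"

definition prel :: "'a set set \<Rightarrow> ('a \<times> 'a) set" where
  "prel P = {(x, y). \<exists>B\<in>P. x \<in> B \<and> y \<in> B}"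

definition pjoin :: "'a set set \<Rightarrow> 'a set set \<Rightarrow> 'a set set" where
  "pjoin P Q = (\<Union>P \<union> \<Union>Q) // ((prel P \<union> prel Q)\<^sup>*)"

definition nc :: "'a set set \<Rightarrow> nat" where
  "nc P = card P"

definition one_k :: "nat \<Rightarrow> pt set set" where
  "one_k k = {{(x, False), (x, True)} | x. x \<in> {1..k}}"

definition eproj :: "nat \<Rightarrow> nat \<Rightarrow> nat \<Rightarrow> pt set set" where
  "eproj k i j = {{(i, False), (j, False)}, {(i, True), (j, True)}} \<union>
     {{(x, False), (x, True)} | x. x \<in> {1..k} \<and> x \<noteq> i \<and> x \<noteq> j}"

text \<open>An orientation of b: every link and every vertical edge of the graph
  Gamma_b gets a direction (L = oriented links, V = oriented vertical edges),
  such that every vertex has exactly one incoming and one outgoing edge,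
  i.e. every cycle of Gamma_b is oriented consistently.\<close>
definition orientation :: "nat \<Rightarrow> pt set set \<Rightarrow> (pt \<times> pt) set \<Rightarrow> (pt \<times> pt) set \<Rightarrow> bool" where
  "orientation k b L V \<longleftrightarrow>
     L \<subseteq> {(u, v). {u, v} \<in> b} \<and>
     (\<forall>u v. {u, v} \<in> b \<longrightarrow> ((u, v) \<in> L \<longleftrightarrow> (v, u) \<notin> L)) \<and>
     V \<subseteq> {((x, False), (x, True)) | x. x \<in> {1..k}} \<union> {((x, True), (x, False)) | x. x \<in> {1..k}} \<and>
     (\<forall>x\<in>{1..k}. ((x, False), (x, True)) \<in> V \<longleftrightarrow> ((x, True), (x, False)) \<notin> V) \<and>
     (\<forall>v\<in>ground k. card {u. (u, v) \<in> L} + card {u. (u, v) \<in> V} = 1 \<and>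
                    card {w. (v, w) \<in> L} + card {w. (v, w) \<in> V} = 1)"

definition osign :: "(pt \<times> pt) set \<Rightarrow> nat \<Rightarrow> int" where
  "osign L x = (if \<exists>u. (u, (x, False)) \<in> L then 1 else -1)"

end

theory Submission
  imports Defs
begin


definition tau :: "pt \<Rightarrow> pt" where "tau v = (fst v, \<not> snd v)"

lemma tau_tau[simp]: "tau (tau v) = v" by (simp add: tau_def)
lemma tau_ne[simp]: "tau v \<noteq> v" by (cases v) (simp add: tau_def)
lemma tau_ground[simp]: "tau v \<in> ground k \<longleftrightarrow> v \<in> ground k"
  by (cases v) (auto simp: tau_def ground_def)

definition taue :: "nat \<Rightarrow> nat \<Rightarrow> pt \<Rightarrow> pt" where
  "taue i j x = (if fst x = i then (j, snd x) else if fst x = j then (i, snd x) else tau x)"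

locale bsetup =
  fixes k :: nat and b :: "pt set set"
  assumes br: "brauer k b"
begin

abbreviation "X \<equiv> ground k"

lemma Ub: "\<Union>b = X" using br by (simp add: brauer_def is_partition_def)

lemma blk_card: "B \<in> b \<Longrightarrow> card B = 2" using br by (simp add: brauer_def)

lemma blk_disj: "B \<in> b \<Longrightarrow> C \<in> b \<Longrightarrow> x \<in> B \<Longrightarrow> x \<in> C \<Longrightarrow> B = C"
  using br unfolding brauer_def is_partition_def by blast

lemma blk_sub: "B \<in> b \<Longrightarrow> B \<subseteq> X" using Ub by blast

lemma ex1_partner: assumes "x \<in> X" shows "\<exists>!y. y \<noteq> x \<and> {x, y} \<in> b"
proof -
  obtain B where B: "B \<in> b" "x \<in> B" using assms Ub by blast
  then obtain y where y: "B = {x, y}" "y \<noteq> x" using blk_card[OF B(1)]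
    by (metis card_2_iff doubleton_eq_iff insertE singletonD)
  show ?thesis
  proof (rule ex1I[of _ y])
    show "y \<noteq> x \<and> {x, y} \<in> b" using y B by auto
  next
    fix z assume z: "z \<noteq> x \<and> {x, z} \<in> b"
    then have "{x, z} = B" using blk_disj[of "{x,z}" B x] B by auto
    then show "z = y" using y z by (auto simp: doubleton_eq_iff)
  qed
qed

definition bet :: "pt \<Rightarrow> pt" where
  "bet x = (if x \<in> X then (THE y. y \<noteq> x \<and> {x, y} \<in> b) else x)"

lemma bet_prop: "x \<in> X \<Longrightarrow> bet x \<noteq> x \<and> {x, bet x} \<in> b"
  unfolding bet_def using theI'[OF ex1_partner] by simp

lemma bet_ne: "x \<in> X \<Longrightarrow> bet x \<noteq> x" using bet_prop by blast
lemma bet_blk: "x \<in> X \<Longrightarrow> {x, bet x} \<in> b" using bet_prop by blast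
lemma bet_in: "x \<in> X \<Longrightarrow> bet x \<in> X" using bet_blk blk_sub by blast

lemma bet_uniq: "{x, y} \<in> b \<Longrightarrow> y \<noteq> x \<Longrightarrow> y = bet x"
proof -
  assume a: "{x, y} \<in> b" "y \<noteq> x"
  then have x: "x \<in> X" using blk_sub by blast
  show ?thesis using ex1_partner[OF x] bet_prop[OF x] a by blast
qed

lemma blk_ne: "{x, y} \<in> b \<Longrightarrow> y \<noteq> x"
  using blk_card by fastforce

lemma bet_bet[simp]: "bet (bet x) = x"
proof (cases "x \<in> X")
  case True
  have "{bet x, x} \<in> b" using bet_blk[OF True] by (simp add: insert_commute)
  then show ?thesis using bet_uniq bet_ne[OF True] by metis
qed (simp add: bet_def)

lemma prel_b: "(x, y) \<in> prel b \<Longrightarrow> x \<in> X \<and> (y = x \<or> y = bet x)"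
proof -
  assume "(x, y) \<in> prel b"
  then obtain B where B: "B \<in> b" "x \<in> B" "y \<in> B" by (auto simp: prel_def)
  have x: "x \<in> X" using B blk_sub by blast
  have "B = {x, bet x}" using blk_disj[OF B(1) bet_blk[OF x]] B by simp
  then show ?thesis using B x by auto
qed

lemma prel_b_I: "x \<in> X \<Longrightarrow> (x, bet x) \<in> prel b"
  using bet_blk unfolding prel_def by blast

lemma U1: "\<Union>(one_k k) = X"
proof
  show "\<Union>(one_k k) \<subseteq> X" by (auto simp: one_k_def ground_def)
  show "X \<subseteq> \<Union>(one_k k)"
  proof
    fix v assume "v \<in> X"
    then obtain a s where v: "v = (a, s)" "a \<in> {1..k}" by (cases v) (auto simp: ground_def)
    then have "{(a, False), (a, True)} \<in> one_k k" by (auto simp: one_k_def)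
    moreover have "v \<in> {(a, False), (a, True)}" using v by (cases s) auto
    ultimately show "v \<in> \<Union>(one_k k)" by blast
  qed
qed

lemma prel_1: "(x, y) \<in> prel (one_k k) \<Longrightarrow> x \<in> X \<and> (y = x \<or> y = tau x)"
  by (auto simp: prel_def one_k_def ground_def tau_def)

lemma prel_1_I: "x \<in> X \<Longrightarrow> (x, tau x) \<in> prel (one_k k)"
proof -
  assume "x \<in> X"
  then obtain a s where v: "x = (a, s)" "a \<in> {1..k}" by (cases x) (auto simp: ground_def)
  then have "{(a, False), (a, True)} \<in> one_k k" by (auto simp: one_k_def)
  moreover have "x \<in> {(a, False), (a, True)}" "tau x \<in> {(a, False), (a, True)}"
    using v by (cases s, auto simp: tau_def)+
  ultimately show ?thesis unfolding prel_def by blast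
qed

end


context bsetup begin

definition F :: "pt \<Rightarrow> pt" where "F = bet \<circ> tau"

lemma F_in: "x \<in> X \<Longrightarrow> (F ^^ m) x \<in> X"
  by (induction m) (auto simp: F_def bet_in)

lemma inj_F: "inj F"
  unfolding F_def by (rule inj_compose) (metis bet_bet injI, metis tau_tau injI)

lemma F_tau_F: "F (tau (F y)) = tau y"
  by (simp add: F_def)

lemma key: "(F ^^ m) (tau ((F ^^ m) x)) = tau x"
proof (induction m)
  case (Suc m)
  have h2: "(F ^^ Suc m) z = (F ^^ m) (F z)" for z by (simp add: funpow_swap1)
  have "(F ^^ Suc m) (tau ((F ^^ Suc m) x)) = (F ^^ m) (F (tau ((F ^^ Suc m) x)))"
    by (rule h2)
  also have "\<dots> = (F ^^ m) (F (tau (F ((F ^^ m) x))))" by simp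
  finally have "(F ^^ Suc m) (tau ((F ^^ Suc m) x)) = (F ^^ m) (F (tau (F ((F ^^ m) x))))" .
  also have "\<dots> = tau x" using Suc by (simp add: F_tau_F)
  finally show ?case .
qed simp

lemma Fm_inj: "(F ^^ m) x = (F ^^ m) y \<Longrightarrow> x = y"
  using inj_fn[OF inj_F, of m] by (meson injD)

lemma disj_AB: assumes "v \<in> X" shows "(F ^^ a) v \<noteq> tau ((F ^^ c) v)"
proof
  assume h: "(F ^^ a) v = tau ((F ^^ c) v)"
  have "tau v = (F ^^ c) (tau ((F ^^ c) v))" using key by simp
  also have "\<dots> = (F ^^ (c + a)) v" using h by (simp add: funpow_add)
  finally have ts: "tau v = (F ^^ (c + a)) v" .
  show False
  proof (cases "even (c + a)")
    case True
    then obtain m where "c + a = 2 * m" using True evenE by blast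
    then have m: "c + a = m + m" by simp
    have "(F ^^ m) (tau ((F ^^ m) v)) = (F ^^ m) ((F ^^ m) v)"
      using key ts m by (simp add: funpow_add)
    then have "tau ((F ^^ m) v) = (F ^^ m) v" by (rule Fm_inj)
    then show False using tau_ne by blast
  next
    case False
    then obtain m where "c + a = 2 * m + 1" using False oddE by blast
    then have m: "c + a = m + Suc m" by simp
    have "(F ^^ m) (tau ((F ^^ m) v)) = (F ^^ m) ((F ^^ Suc m) v)"
      using key ts m by (simp add: funpow_add funpow_swap1)
    then have e: "tau ((F ^^ m) v) = (F ^^ Suc m) v" by (rule Fm_inj)
    have y: "tau ((F ^^ m) v) \<in> X" using F_in assms by simp
    have "bet (tau ((F ^^ m) v)) = tau ((F ^^ m) v)"
      using e by (simp add: F_def)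
    then show False using bet_ne[OF y] by simp
  qed
qed

lemma period: assumes "v \<in> X" shows "\<exists>N>0. (F ^^ N) v = v"
proof -
  have "range (\<lambda>m. (F ^^ m) v) \<subseteq> X" using F_in assms by blast
  moreover have "finite X" by (simp add: ground_def)
  ultimately have "finite (range (\<lambda>m. (F ^^ m) v))" using finite_subset by blast
  then have "\<not> inj (\<lambda>m. (F ^^ m) v)" using finite_imageD infinite_UNIV_nat by blast
  then obtain a c where ac: "a \<noteq> c" "(F ^^ a) v = (F ^^ c) v" unfolding inj_def by blast
  then have "\<exists>a c. a < c \<and> (F ^^ a) v = (F ^^ c) v"
  proof (cases "a < c")
    case True then show ?thesis using ac by blast
  next
    case False then have "c < a" using ac by simp
    then show ?thesis using ac by metis
  qed
  then obtain a c where ac: "a < c" "(F ^^ a) v = (F ^^ c) v" by blast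
  then have "(F ^^ a) v = (F ^^ a) ((F ^^ (c - a)) v)"
  proof -
    have "c = a + (c - a)" using ac by simp
    then have "(F ^^ c) v = (F ^^ a) ((F ^^ (c - a)) v)" by (metis funpow_add o_apply)
    then show ?thesis using ac by simp
  qed
  then have "v = (F ^^ (c - a)) v" by (rule Fm_inj)
  then show ?thesis using ac by (intro exI[of _ "c - a"]) auto
qed

lemma bet_FSuc: "bet ((F ^^ Suc m) v) = tau ((F ^^ m) v)"
  by (simp add: F_def)

lemma cover:
  assumes c1: "nc (pjoin b (one_k k)) = 1" and v: "v \<in> X" and x: "x \<in> X"
  shows "\<exists>m. x = (F ^^ m) v \<or> x = tau ((F ^^ m) v)"
proof -
  let ?r = "(prel b \<union> prel (one_k k))\<^sup>*"
  have pj: "pjoin b (one_k k) = X // ?r" unfolding pjoin_def using Ub U1 by simp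
  then have "card (X // ?r) = 1" using c1 by (simp add: nc_def)
  then obtain C where C: "X // ?r = {C}" using card_1_singletonE by blast
  have "?r `` {v} \<in> X // ?r" "?r `` {x} \<in> X // ?r" using v x by (auto intro: quotientI)
  then have "?r `` {v} = C" "?r `` {x} = C" unfolding C by simp_all
  then have "?r `` {v} = ?r `` {x}" by simp
  moreover have "x \<in> ?r `` {x}" by simp
  ultimately have "x \<in> ?r `` {v}" by simp
  then have vx: "(v, x) \<in> ?r" by simp
  obtain N where N: "N > 0" "(F ^^ N) v = v" using period[OF v] by blast
  let ?S = "{y. \<exists>m. y = (F ^^ m) v \<or> y = tau ((F ^^ m) v)}"
  have "x \<in> ?S" using vx
  proof (induction rule: rtrancl_induct)
    case base
    then show ?case by (auto intro: exI[of _ 0])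
  next
    case (step y z)
    from step(3) obtain m where m: "y = (F ^^ m) v \<or> y = tau ((F ^^ m) v)" by blast
    from step(2) have "z = y \<or> z = bet y \<or> z = tau y" using prel_b prel_1 by blast
    moreover have "bet y \<in> ?S"
    proof (cases "y = (F ^^ m) v")
      case True
      show ?thesis
      proof (cases m)
        case 0
        have "bet y = bet ((F ^^ Suc (N - 1)) v)" using N True 0 by simp
        then have "bet y = tau ((F ^^ (N - 1)) v)" using bet_FSuc by simp
        then show ?thesis by blast
      next
        case (Suc n)
        then show ?thesis using True bet_FSuc by blast
      qed
    next
      case False
      then have "bet y = (F ^^ Suc m) v" using m by (simp add: F_def)
      then show ?thesis by blast
    qed
    moreover have "tau y \<in> ?S" using m by auto
    ultimately show ?case using step(3) by blast
  qed
  then show ?thesis by blast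
qed

end

lemma quot_two:
  assumes sym: "sym r" and tr: "trans r" and rf: "\<And>x. (x, x) \<in> r"
    and a: "a \<in> X" and c: "c \<in> X" and all: "\<forall>y\<in>X. (a, y) \<in> r \<or> (c, y) \<in> r"
  shows "card (X // r) = (if (a, c) \<in> r then 1 else 2)"
proof -
  have cls: "r `` {y} = r `` {z}" if "(y, z) \<in> r" for y z
    using that sym tr unfolding sym_def trans_def by blast
  have "X // r = {r `` {a}, r `` {c}}"
  proof
    show "X // r \<subseteq> {r `` {a}, r `` {c}}"
    proof
      fix Q assume "Q \<in> X // r"
      then obtain y where y: "y \<in> X" "Q = r `` {y}" by (auto elim: quotientE)
      then have "(a, y) \<in> r \<or> (c, y) \<in> r" using all by blast
      then show "Q \<in> {r `` {a}, r `` {c}}" using cls y by auto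
    qed
    show "{r `` {a}, r `` {c}} \<subseteq> X // r" using a c by (auto intro: quotientI)
  qed
  moreover have "r `` {a} = r `` {c} \<longleftrightarrow> (a, c) \<in> r"
  proof
    assume "r `` {a} = r `` {c}"
    then have "c \<in> r `` {a}" using rf by blast
    then show "(a, c) \<in> r" by blast
  qed (rule cls)
  ultimately show ?thesis by auto
qed



lemma taue_i[simp]: "taue i j (i, s) = (j, s)" by (simp add: taue_def)
lemma taue_j[simp]: "i \<noteq> j \<Longrightarrow> taue i j (j, s) = (i, s)" by (simp add: taue_def)
lemma taue_o: "fst x \<noteq> i \<Longrightarrow> fst x \<noteq> j \<Longrightarrow> taue i j x = tau x" by (simp add: taue_def)
lemma fst_cases: "fst x = a \<Longrightarrow> x = (a, False) \<or> x = tau (a, False)"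
  by (cases x) (auto simp: tau_def)
lemma tau_pair[simp]: "tau (a, s) = (a, \<not> s)" by (simp add: tau_def)

lemma sym_prel: "sym (prel P)" unfolding prel_def sym_def by blast

context bsetup begin

lemma Ue: assumes "i \<in> {1..k}" "j \<in> {1..k}" "i \<noteq> j" shows "\<Union>(eproj k i j) = X"
proof
  show "\<Union>(eproj k i j) \<subseteq> X" using assms by (auto simp: eproj_def ground_def)
  show "X \<subseteq> \<Union>(eproj k i j)"
  proof
    fix v assume "v \<in> X"
    then obtain a s where v: "v = (a, s)" "a \<in> {1..k}" by (cases v) (auto simp: ground_def)
    show "v \<in> \<Union>(eproj k i j)"
    proof (cases "a = i \<or> a = j")
      case True
      then show ?thesis using v unfolding eproj_def by (cases s) auto
    next
      case False
      then have "{(a, False), (a, True)} \<in> eproj k i j" using v by (auto simp: eproj_def)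
      moreover have "v \<in> {(a, False), (a, True)}" using v by (cases s) auto
      ultimately show ?thesis by blast
    qed
  qed
qed

lemma prel_e: assumes "i \<in> {1..k}" "j \<in> {1..k}" "i \<noteq> j"
  shows "(x, y) \<in> prel (eproj k i j) \<Longrightarrow> x \<in> X \<and> (y = x \<or> y = taue i j x)"
  using assms by (auto simp: prel_def eproj_def ground_def taue_def tau_def)

lemma prel_e_I: assumes "i \<in> {1..k}" "j \<in> {1..k}" "i \<noteq> j" and x: "x \<in> X"
  shows "(x, taue i j x) \<in> prel (eproj k i j)"
proof -
  obtain a s where v: "x = (a, s)" "a \<in> {1..k}" using x by (cases x) (auto simp: ground_def)
  show ?thesis
  proof (cases "a = i \<or> a = j")
    case True
    then show ?thesis using v assms unfolding eproj_def prel_def by (cases s) auto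
  next
    case False
    then have "{(a, False), (a, True)} \<in> eproj k i j" using v by (auto simp: eproj_def)
    moreover have "x \<in> {(a, False), (a, True)}" "taue i j x \<in> {(a, False), (a, True)}"
      using v False by (cases s, auto simp: taue_def)+
    ultimately show ?thesis unfolding prel_def by blast
  qed
qed

end


context bsetup begin

lemma main_nc:
  assumes c1: "nc (pjoin b (one_k k)) = 1"
    and ik: "i \<in> {1..k}" and jk: "j \<in> {1..k}" and ij: "i \<noteq> j"
  shows "nc (pjoin (eproj k i j) b) = (if \<exists>m. (j, False) = (F ^^ m) (i, False) then 1 else 2)"
proof -
  define vi where "vi = (i, False)"
  define vj where "vj = (j, False)"
  define r where "r = (prel (eproj k i j) \<union> prel b)\<^sup>*"
  have viX: "vi \<in> X" and vjX: "vj \<in> X" using ik jk by (auto simp: vi_def vj_def ground_def)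
  have symr: "sym r" unfolding r_def by (intro sym_rtrancl sym_Un sym_prel)
  have trr: "trans r" unfolding r_def by (rule trans_rtrancl)
  have rfl: "(x, x) \<in> r" for x unfolding r_def by simp
  have rsym: "(x, y) \<in> r \<Longrightarrow> (y, x) \<in> r" for x y using symr unfolding sym_def by blast
  have rtr: "(x, y) \<in> r \<Longrightarrow> (y, z) \<in> r \<Longrightarrow> (x, z) \<in> r" for x y z
    using trr unfolding trans_def by blast
  have rbet: "x \<in> X \<Longrightarrow> (x, bet x) \<in> r" for x
    unfolding r_def using prel_b_I by blast
  have rtaue: "x \<in> X \<Longrightarrow> (x, taue i j x) \<in> r" for x
    unfolding r_def using prel_e_I[OF ik jk ij] by blast
  have step: "(x, y) \<in> prel (eproj k i j) \<union> prel b \<Longrightarrow> x \<in> X \<and> (y = x \<or> y = bet x \<or> y = taue i j x)" for x y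
    using prel_e[OF ik jk ij] prel_b by blast
  have FS: "(F ^^ Suc m) v = bet (tau ((F ^^ m) v))" for m v by (simp add: F_def)
  have pj: "pjoin (eproj k i j) b = X // r" unfolding pjoin_def r_def using Ue[OF ik jk ij] Ub by simp
  have tvi: "tau vi = (i, True)" and tvj: "tau vj = (j, True)" by (simp_all add: vi_def vj_def)
  have FX: "(F ^^ m) vi \<in> X" for m using F_in viX .
  have covF: "(vi, (F ^^ m) vi) \<in> r \<or> (tau vi, (F ^^ m) vi) \<in> r" for m
  proof (induction m)
    case 0 then show ?case using rfl by simp
  next
    case (Suc m)
    define x where "x = (F ^^ m) vi"
    have xX: "x \<in> X" unfolding x_def by (rule FX)
    have txX: "tau x \<in> X" using xX by simp
    have Fx: "(F ^^ Suc m) vi = bet (tau x)" using FS x_def by simp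
    show ?case
    proof (cases "fst x = i \<or> fst x = j")
      case True
      then consider "x = vi" | "x = tau vi" | "x = vj" | "x = tau vj"
        using fst_cases unfolding vi_def vj_def by blast
      then show ?thesis
      proof cases
        case 1 then show ?thesis using Fx rbet[of "tau vi"] viX by simp
      next
        case 2 then show ?thesis using Fx rbet[OF viX] by simp
      next
        case 3
        have "tau vi \<in> X" using viX by simp
        then have "(tau vi, taue i j (tau vi)) \<in> r" by (rule rtaue)
        then have "(tau vi, tau vj) \<in> r" using tvi tvj by simp
        moreover have "(tau vj, bet (tau vj)) \<in> r" using rbet vjX by simp
        ultimately have "(tau vi, bet (tau vj)) \<in> r" by (rule rtr)
        then show ?thesis using 3 Fx by simp
      next
        case 4
        have "(vi, vj) \<in> r" using rtaue[OF viX] by (simp add: vi_def vj_def)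
        moreover have "(vj, bet vj) \<in> r" using rbet vjX by simp
        ultimately have "(vi, bet vj) \<in> r" by (rule rtr)
        then show ?thesis using 4 Fx by simp
      qed
    next
      case False
      then have "(x, tau x) \<in> r" using rtaue[OF xX] taue_o by simp
      moreover have "(tau x, bet (tau x)) \<in> r" using rbet txX by simp
      ultimately have "(x, bet (tau x)) \<in> r" by (rule rtr)
      then have xF: "(x, (F ^^ Suc m) vi) \<in> r" using Fx by simp
      show ?thesis using Suc.IH unfolding x_def[symmetric]
      proof
        assume "(vi, x) \<in> r" then show ?thesis using rtr[OF _ xF] by blast
      next
        assume "(tau vi, x) \<in> r" then show ?thesis using rtr[OF _ xF] by blast
      qed
    qed
  qed
  have allc: "\<forall>y\<in>X. (vi, y) \<in> r \<or> (tau vi, y) \<in> r"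
  proof
    fix y assume y: "y \<in> X"
    obtain m where m: "y = (F ^^ m) vi \<or> y = tau ((F ^^ m) vi)" using cover[OF c1 viX y] by blast
    show "(vi, y) \<in> r \<or> (tau vi, y) \<in> r"
    proof (cases "y = (F ^^ m) vi")
      case True then show ?thesis using covF by simp
    next
      case False
      then have yy: "y = tau ((F ^^ m) vi)" using m by simp
      have "(y, (F ^^ Suc m) vi) \<in> r" using rbet[of y] yy FS FX by simp
      then have "((F ^^ Suc m) vi, y) \<in> r" by (rule rsym)
      note yF = this
      show ?thesis using covF[of "Suc m"]
      proof
        assume "(vi, (F ^^ Suc m) vi) \<in> r" then show ?thesis using rtr[OF _ yF] by blast
      next
        assume "(tau vi, (F ^^ Suc m) vi) \<in> r" then show ?thesis using rtr[OF _ yF] by blast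
      qed
    qed
  qed
  have card: "nc (pjoin (eproj k i j) b) = (if (vi, tau vi) \<in> r then 1 else 2)"
    unfolding pj nc_def using quot_two[OF symr trr rfl viX _ allc] viX by simp
  have noret: "(F ^^ m) vi \<noteq> vi"
    if p: "(F ^^ p) vi = t" and mn: "\<And>n. n < p \<Longrightarrow> (F ^^ n) vi \<noteq> t" and m: "0 < m" "m < p" for m p t
  proof
    assume h: "(F ^^ m) vi = vi"
    have "p = (p - m) + m" using m by simp
    then have "(F ^^ p) vi = (F ^^ (p - m)) ((F ^^ m) vi)" by (metis funpow_add o_apply)
    then have "(F ^^ (p - m)) vi = t" using h p by simp
    then show False using mn[of "p - m"] m by simp
  qed
  show ?thesis
  proof (cases "\<exists>m. vj = (F ^^ m) vi")
    case True
    define p where "p = (LEAST p. (F ^^ p) vi = vj)"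
    have Fp: "(F ^^ p) vi = vj" using True LeastI_ex[of "\<lambda>p. (F ^^ p) vi = vj"] p_def by metis
    have lt: "n < p \<Longrightarrow> (F ^^ n) vi \<noteq> vj" for n using not_less_Least p_def by blast
    have p0: "p > 0" using Fp ij by (cases p) (auto simp: vi_def vj_def)
    have nfst: "fst ((F ^^ m) vi) \<noteq> i \<and> fst ((F ^^ m) vi) \<noteq> j" if m: "0 < m" "m < p" for m
    proof -
      have "(F ^^ m) vi \<noteq> vi" using noret[OF Fp lt m] .
      moreover have "(F ^^ m) vi \<noteq> vj" using lt m by simp
      moreover have "(F ^^ m) vi \<noteq> tau vi" using disj_AB[OF viX, of m 0] by simp
      moreover have "(F ^^ m) vi \<noteq> tau vj" using disj_AB[OF viX, of m p] Fp by simp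
      ultimately show ?thesis using fst_cases unfolding vi_def vj_def by metis
    qed
    have chain: "m < p \<Longrightarrow> (tau vi, (F ^^ Suc m) vi) \<in> r" for m
    proof (induction m)
      case 0 then show ?case using rbet[of "tau vi"] viX FS[of 0] by simp
    next
      case (Suc m)
      define x where "x = (F ^^ Suc m) vi"
      have xX: "x \<in> X" unfolding x_def by (rule FX)
      have "(x, tau x) \<in> r" using rtaue[OF xX] taue_o nfst[of "Suc m"] Suc.prems x_def by simp
      moreover have "(tau x, bet (tau x)) \<in> r" using rbet xX by simp
      ultimately have "(x, bet (tau x)) \<in> r" by (rule rtr)
      moreover have "(F ^^ Suc (Suc m)) vi = bet (tau x)" unfolding x_def by (rule FS)
      ultimately have xF: "(x, (F ^^ Suc (Suc m)) vi) \<in> r" by simp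
      have "(tau vi, x) \<in> r" using Suc.IH Suc.prems x_def by simp
      then show ?case using rtr[OF _ xF] by blast
    qed
    have "(tau vi, vj) \<in> r" using chain[of "p - 1"] p0 Fp by simp
    moreover have "(vi, vj) \<in> r" using rtaue[OF viX] by (simp add: vi_def vj_def)
    ultimately have "(vi, tau vi) \<in> r" using rtr[OF _ rsym] by blast
    then show ?thesis using card True by (simp add: vi_def vj_def)
  next
    case False
    obtain q where "vj = (F ^^ q) vi \<or> vj = tau ((F ^^ q) vi)" using cover[OF c1 viX vjX] by blast
    then have tq: "tau vj = (F ^^ q) vi" using False by auto
    define p where "p = (LEAST p. (F ^^ p) vi = tau vj)"
    have Fp: "(F ^^ p) vi = tau vj"
      using tq LeastI_ex[of "\<lambda>p. (F ^^ p) vi = tau vj"] p_def by metis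
    have lt: "n < p \<Longrightarrow> (F ^^ n) vi \<noteq> tau vj" for n using not_less_Least p_def by blast
    have p0: "p > 0" using Fp by (cases p) (auto simp: vi_def vj_def)
    have nfst: "fst ((F ^^ m) vi) \<noteq> i \<and> fst ((F ^^ m) vi) \<noteq> j" if m: "0 < m" "m < p" for m
    proof -
      have "(F ^^ m) vi \<noteq> vi" using noret[OF Fp lt m] .
      moreover have "(F ^^ m) vi \<noteq> tau vj" using lt m by simp
      moreover have "(F ^^ m) vi \<noteq> tau vi" using disj_AB[OF viX, of m 0] by simp
      moreover have "(F ^^ m) vi \<noteq> vj" using False by metis
      ultimately show ?thesis using fst_cases unfolding vi_def vj_def by metis
    qed
    define S where "S = {y. \<exists>m. (y = (F ^^ m) vi \<and> 0 < m \<and> m \<le> p) \<or> (y = tau ((F ^^ m) vi) \<and> m < p)}"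
    have tviS: "tau vi \<in> S" unfolding S_def using p0 by (auto intro!: exI[of _ 0])
    have clos: "y \<in> S" if xy: "(x, y) \<in> prel (eproj k i j) \<union> prel b" and xS: "x \<in> S" for x y
    proof -
      have yc: "y = x \<or> y = bet x \<or> y = taue i j x" using step[OF xy] by blast
      from xS obtain m where m: "(x = (F ^^ m) vi \<and> 0 < m \<and> m \<le> p) \<or> (x = tau ((F ^^ m) vi) \<and> m < p)"
        unfolding S_def by blast
      show ?thesis
      proof (cases "x = (F ^^ m) vi \<and> 0 < m \<and> m \<le> p")
        case True
        then obtain n where n: "m = Suc n" by (cases m) auto
        have "bet x = tau ((F ^^ n) vi)" using True n FS by simp
        then have b: "bet x \<in> S" unfolding S_def using True n by auto
        have t: "taue i j x \<in> S"
        proof (cases "m < p")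
          case True
          then have "taue i j x = tau x" using nfst[of m] \<open>x = _ \<and> _\<close> taue_o by auto
          then show ?thesis unfolding S_def using True \<open>x = _ \<and> _\<close> by auto
        next
          case False
          then have "x = (j, True)" using True Fp tvj by auto
          then have "taue i j x = tau ((F ^^ 0) vi)" using ij by (simp add: vi_def)
          then show ?thesis unfolding S_def using p0 by blast
        qed
        show ?thesis using yc b t xS by blast
      next
        case False
        then have xm: "x = tau ((F ^^ m) vi)" "m < p" using m by auto
        have "bet x = (F ^^ Suc m) vi" using xm FS by simp
        moreover have "(F ^^ Suc m) vi \<in> S" unfolding S_def using xm
          by (intro CollectI exI[of _ "Suc m"]) simp
        ultimately have b: "bet x \<in> S" by simp
        have t: "taue i j x \<in> S"
        proof (cases "m = 0")
          case True
          then have "taue i j x = (F ^^ p) vi" using xm Fp by (simp add: vi_def vj_def)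
          then show ?thesis unfolding S_def using p0 by auto
        next
          case False
          then have "fst x \<noteq> i" "fst x \<noteq> j" using nfst[of m] xm by (auto simp: tau_def)
          then have "taue i j x = (F ^^ m) vi" using xm taue_o by simp
          then show ?thesis unfolding S_def using xm False by auto
        qed
        show ?thesis using yc b t xS by blast
      qed
    qed
    have reachS: "(tau vi, y) \<in> r \<Longrightarrow> y \<in> S" for y
      unfolding r_def
    proof (induction rule: rtrancl_induct)
      case base then show ?case using tviS .
    next
      case (step y z) then show ?case using clos by blast
    qed
    have "vi \<notin> S"
    proof
      assume "vi \<in> S"
      then obtain m where m: "(vi = (F ^^ m) vi \<and> 0 < m \<and> m \<le> p) \<or> (vi = tau ((F ^^ m) vi) \<and> m < p)"
        unfolding S_def by blast
      show False
      proof (cases "vi = tau ((F ^^ m) vi)")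
        case True then show False using disj_AB[OF viX, of 0 m] by simp
      next
        case False
        then have mm: "vi = (F ^^ m) vi" "0 < m" "m \<le> p" using m by auto
        show False
        proof (cases "m < p")
          case True then show False using noret[OF Fp lt] mm by metis
        next
          case False then have "m = p" using mm by simp
          then show False using mm Fp by (simp add: vi_def vj_def)
        qed
      qed
    qed
    then have "(tau vi, vi) \<notin> r" using reachS by blast
    then have "(vi, tau vi) \<notin> r" using rsym by blast
    then show ?thesis using card False by (simp add: vi_def vj_def)
  qed
qed

end


definition hasin :: "(pt \<times> pt) set \<Rightarrow> pt \<Rightarrow> bool" where
  "hasin L v = (\<exists>u. (u, v) \<in> L)"

lemma osign_hasin: "osign L x = (if hasin L (x, False) then 1 else -1)"
  by (simp add: osign_def hasin_def)

context bsetup begin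

lemma orient_col:
  assumes o: "orientation k b L V" and x: "x \<in> X"
  shows "hasin L (bet x) \<longleftrightarrow> \<not> hasin L x"
    and "hasin L (tau x) \<longleftrightarrow> \<not> hasin L x"
  unfolding hasin_def
proof -
  note oo = o[unfolded orientation_def]
  have o1: "L \<subseteq> {(u, v). {u, v} \<in> b}" using oo by (rule conjunct1)
  have o2: "\<And>u v. {u, v} \<in> b \<Longrightarrow> ((u, v) \<in> L \<longleftrightarrow> (v, u) \<notin> L)"
    using oo[THEN conjunct2, THEN conjunct1] by blast
  have o3: "V \<subseteq> {((x, False), (x, True)) | x. x \<in> {1..k}} \<union> {((x, True), (x, False)) | x. x \<in> {1..k}}"
    using oo[THEN conjunct2, THEN conjunct2, THEN conjunct1] .
  have o4: "\<forall>x\<in>{1..k}. ((x, False), (x, True)) \<in> V \<longleftrightarrow> ((x, True), (x, False)) \<notin> V"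
    using oo[THEN conjunct2, THEN conjunct2, THEN conjunct2, THEN conjunct1] .
  have o5: "\<forall>v\<in>X. card {u. (u, v) \<in> L} + card {u. (u, v) \<in> V} = 1"
    using oo[THEN conjunct2, THEN conjunct2, THEN conjunct2, THEN conjunct2] by blast
  have Lin: "(u, v) \<in> L \<Longrightarrow> u = bet v" for u v
  proof -
    assume "(u, v) \<in> L"
    then have "{u, v} \<in> b" using o1 by blast
    then have "{v, u} \<in> b" by (simp add: insert_commute)
    then show ?thesis using bet_uniq blk_ne by blast
  qed
  have Vin: "(u, v) \<in> V \<Longrightarrow> u = tau v" for u v
  proof -
    assume "(u, v) \<in> V"
    then have "(u, v) \<in> {((x, False), (x, True)) | x. x \<in> {1..k}} \<union> {((x, True), (x, False)) | x. x \<in> {1..k}}"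
      using o3 by (rule subsetD[rotated])
    then show ?thesis by (auto simp: tau_def)
  qed
  have dL: "(\<exists>u. (u, v) \<in> L) \<longleftrightarrow> (bet v, v) \<in> L" for v
  proof
    assume "\<exists>u. (u, v) \<in> L"
    then obtain u where u: "(u, v) \<in> L" by blast
    then have "u = bet v" by (rule Lin)
    then show "(bet v, v) \<in> L" using u by simp
  qed blast
  have deg: "(bet v, v) \<in> L \<longleftrightarrow> (tau v, v) \<notin> V" if v: "v \<in> X" for v
  proof -
    have nL: "(u, v) \<in> L \<Longrightarrow> (bet v, v) \<in> L" for u using Lin by metis
    have nV: "(u, v) \<in> V \<Longrightarrow> (tau v, v) \<in> V" for u using Vin by metis
    have e1: "{u. (u, v) \<in> L} = (if (bet v, v) \<in> L then {bet v} else {})"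
      by (auto dest: Lin nL split: if_splits)
    have e2: "{u. (u, v) \<in> V} = (if (tau v, v) \<in> V then {tau v} else {})" by (auto dest: Vin nV split: if_splits)
    have "card {u. (u, v) \<in> L} + card {u. (u, v) \<in> V} = 1" using o5 v by blast
    then show ?thesis unfolding e1 e2 by (auto split: if_splits)
  qed
  have v4: "(tau v, v) \<in> V \<longleftrightarrow> (v, tau v) \<notin> V" if v: "v \<in> X" for v
  proof -
    obtain a s where a: "v = (a, s)" "a \<in> {1..k}" using v by (cases v) (auto simp: ground_def)
    then show ?thesis using o4 by (cases s) auto
  qed
  have bX: "bet x \<in> X" using bet_in x .
  have "{bet x, x} \<in> b" using bet_blk[OF x] by (simp add: insert_commute)
  then have "(bet x, x) \<in> L \<longleftrightarrow> (x, bet x) \<notin> L" using o2 by blast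
  then show "(\<exists>u. (u, bet x) \<in> L) \<longleftrightarrow> \<not> (\<exists>u. (u, x) \<in> L)" using dL[of "bet x"] dL[of x] by simp
  have tX: "tau x \<in> X" using x by simp
  show "(\<exists>u. (u, tau x) \<in> L) \<longleftrightarrow> \<not> (\<exists>u. (u, x) \<in> L)"
    using dL[of "tau x"] dL[of x] deg[OF tX] deg[OF x] v4[OF x] by simp
qed

lemma orient_F:
  assumes o: "orientation k b L V" and v: "v \<in> X"
  shows "hasin L ((F ^^ m) v) \<longleftrightarrow> hasin L v"
proof (induction m)
  case (Suc m)
  have y: "(F ^^ m) v \<in> X" using F_in v .
  have "(F ^^ Suc m) v = bet (tau ((F ^^ m) v))" by (simp add: F_def)
  then show ?case using orient_col[OF o] y Suc.IH by simp
qed simp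

end

theorem proposition4p7:
  fixes k i j :: nat and b :: "pt set set"
  assumes "k \<ge> 2"
    and "brauer k b"
    and "nc (pjoin b (one_k k)) = 1"
    and "i \<in> {1..k}" and "j \<in> {1..k}" and "i \<noteq> j"
  shows "int (nc (pjoin (eproj k i j) b)) - int (nc (pjoin b (one_k k))) \<in> {0, 1}
    \<and> (\<forall>L V. orientation k b L V \<longrightarrow>
          (nc (pjoin (eproj k i j) b) = nc (pjoin b (one_k k)) + 1
            \<longleftrightarrow> osign L i * osign L j = -1))"
proof -
  interpret bsetup k b using assms(2) by unfold_locales
  let ?A = "\<exists>m. (j, False) = (F ^^ m) (i, False)"
  have N: "nc (pjoin (eproj k i j) b) = (if ?A then 1 else 2)"
    using main_nc[OF assms(3-6)] .
  have viX: "(i, False) \<in> X" and vjX: "(j, False) \<in> X" using assms(4,5) by (auto simp: ground_def)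
  have part1: "int (nc (pjoin (eproj k i j) b)) - int (nc (pjoin b (one_k k))) \<in> {0, 1}"
    using N assms(3) by simp
  have part2: "nc (pjoin (eproj k i j) b) = nc (pjoin b (one_k k)) + 1
            \<longleftrightarrow> osign L i * osign L j = -1" if o: "orientation k b L V" for L V
  proof -
    let ?d = "hasin L"
    have "?A \<longleftrightarrow> (?d (j, False) \<longleftrightarrow> ?d (i, False))"
    proof
      assume ?A
      then obtain m where "(j, False) = (F ^^ m) (i, False)" by blast
      then show "?d (j, False) \<longleftrightarrow> ?d (i, False)" using orient_F[OF o viX] by simp
    next
      assume h: "?d (j, False) \<longleftrightarrow> ?d (i, False)"
      show ?A
      proof (rule ccontr)
        assume "\<not> ?A"
        then obtain q where q: "(j, False) = tau ((F ^^ q) (i, False))"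
          using cover[OF assms(3) viX vjX] by blast
        have "(F ^^ q) (i, False) \<in> X" using F_in viX .
        then have "?d (j, False) \<longleftrightarrow> \<not> ?d ((F ^^ q) (i, False))" using orient_col(2)[OF o] q by simp
        then show False using h orient_F[OF o viX] by simp
      qed
    qed
    then show ?thesis using N assms(3) unfolding osign_hasin by auto
  qed
  show ?thesis using part1 part2 by blast
qed


end
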